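(* Let $(X,Y)$ be a random pair with $X\in\mathbb{R}^d$ and $Y\in\{+1,-1\}$ with arbitrary joint distribution. Let $\alpha\in[0,1)$ and let $\varphi$ be one of the losses $\varphi_{\mathrm{LR}},\varphi_{\mathrm{LS},\alpha},\varphi_{\mathrm{MLS},\alpha},\varphi_{\mathrm{LSQ}}$, with $\phi(v,y)=\varphi(yv)$. Let $\bar g\in\operatorname{argmin}_{g:\mathbb{R}^d\to\mathbb{R}}\mathbb{E}[\phi(g(X),Y)]$, and let $h(v)=-1$ if $v\le0$ and $h(v)=+1$ if $v>0$. Then $\Pr(h(\bar g(X))\neq Y)=\inf_{f:\mathbb{R}^d\to\{+1,-1\}}\Pr(f(X)\neq Y)$.
   Context: The losses are: $\varphi_{\mathrm{LR}}(v)=-\ln\frac{1}{1+e^{-v}}$; $\varphi_{\mathrm{LS},\alpha}(v)=-(1-\frac{\alpha}{2})\ln\frac{1}{1+e^{-v}}-\frac{\alpha}{2}\ln\frac{1}{1+e^{v}}$; $\varphi_{\mathrm{MLS},\alpha}(v)=-(1-\frac{\alpha}{2})\ln\big(\frac{1-\alpha}{1+e^{-v}}+\frac{\alpha}{2}\big)-\frac{\alpha}{2}\ln\big(\frac{1-\alpha}{1+e^{v}}+\frac{\alpha}{2}\big)$; $\varphi_{\mathrm{LSQ}}(v)=\frac{1}{2(1+e^{v})^2}$. Minimizations/infima are over measurable functions. The left-hand side is the expected zero-one loss (misclassification rate) of the classifier $h\circ\bar g$. *)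

theory Defs
  imports "HOL-Probability.Probability"
begin

definition phi_LR :: "real \<Rightarrow> real" where
  "phi_LR v = - ln (1 / (1 + exp (- v)))"

definition phi_LS :: "real \<Rightarrow> real \<Rightarrow> real" where
  "phi_LS \<alpha> v = - (1 - \<alpha> / 2) * ln (1 / (1 + exp (- v))) - (\<alpha> / 2) * ln (1 / (1 + exp v))"

definition phi_MLS :: "real \<Rightarrow> real \<Rightarrow> real" where
  "phi_MLS \<alpha> v = - (1 - \<alpha> / 2) * ln ((1 - \<alpha>) / (1 + exp (- v)) + \<alpha> / 2)
                   - (\<alpha> / 2) * ln ((1 - \<alpha>) / (1 + exp v) + \<alpha> / 2)"

definition phi_LSQ :: "real \<Rightarrow> real" where
  "phi_LSQ v = 1 / (2 * (1 + exp v)^2)"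

definition hcl :: "real \<Rightarrow> real" where
  "hcl v = (if v \<le> 0 then -1 else 1)"

end

theory Submission
  imports Defs
begin

lemma sig_pos: "0 < 1 / (1 + exp (v::real))" by (simp add: add_pos_pos)
lemma sig_le1: "1 / (1 + exp (v::real)) \<le> 1" by (simp add: add_pos_pos)
lemma sig_mono: "(v::real) > 0 \<Longrightarrow> 1 / (1 + exp v) < 1 / (1 + exp (- v))"
  by (simp add: add_pos_pos divide_strict_left_mono)
lemma lnsig_nonpos: "ln (1 / (1 + exp (v::real))) \<le> 0"
  using sig_pos sig_le1 by (simp add: ln_le_zero_iff)
lemma lnsig_mono: "(v::real) > 0 \<Longrightarrow> ln (1 / (1 + exp v)) < ln (1 / (1 + exp (- v)))"
  using sig_pos sig_mono by (simp only: ln_less_cancel_iff)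

lemma LR_props:
  "phi_LR \<in> borel_measurable borel" "\<forall>v. phi_LR v \<ge> 0" "\<forall>v>0. phi_LR v < phi_LR (- v)"
  "\<exists>D<0. (phi_LR has_real_derivative D) (at 0)"
proof -
  show "phi_LR \<in> borel_measurable borel" unfolding phi_LR_def by measurable
  show "\<forall>v. phi_LR v \<ge> 0" unfolding phi_LR_def using lnsig_nonpos by (simp add: ln_div)
  show "\<forall>v>0. phi_LR v < phi_LR (- v)" unfolding phi_LR_def using lnsig_mono by simp
  have "(phi_LR has_real_derivative (-1/2)) (at 0)" unfolding phi_LR_def
    by (rule derivative_eq_intros refl | simp add: add_pos_pos)+
  then show "\<exists>D<0. (phi_LR has_real_derivative D) (at 0)" by (intro exI[of _ "-1/2"]) auto
qed

lemma LS_props: assumes "0 \<le> \<alpha>" "\<alpha> < 1" shows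
  "phi_LS \<alpha> \<in> borel_measurable borel" "\<forall>v. phi_LS \<alpha> v \<ge> 0" "\<forall>v>0. phi_LS \<alpha> v < phi_LS \<alpha> (- v)"
  "\<exists>D<0. (phi_LS \<alpha> has_real_derivative D) (at 0)"
proof -
  show "phi_LS \<alpha> \<in> borel_measurable borel" unfolding phi_LS_def by measurable
  show "\<forall>v. phi_LS \<alpha> v \<ge> 0" unfolding phi_LS_def
  proof
    fix v
    have "0 \<le> (1 - \<alpha> / 2) * (- ln (1 / (1 + exp (- v))))" using assms lnsig_nonpos[of "-v"] by (intro mult_nonneg_nonneg) auto
    moreover have "0 \<le> (\<alpha> / 2) * (- ln (1 / (1 + exp v)))" using assms lnsig_nonpos[of "v"] by (intro mult_nonneg_nonneg) auto
    ultimately show "0 \<le> - (1 - \<alpha> / 2) * ln (1 / (1 + exp (- v))) - \<alpha> / 2 * ln (1 / (1 + exp v))"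
      by (simp only: mult_minus_right mult_minus_left)
  qed
  show "\<forall>v>0. phi_LS \<alpha> v < phi_LS \<alpha> (- v)" unfolding phi_LS_def
  proof (intro allI impI)
    fix v :: real assume "v > 0"
    then have "(1 - \<alpha>) * ln (1 / (1 + exp v)) < (1 - \<alpha>) * ln (1 / (1 + exp (- v)))"
      using lnsig_mono assms by simp
    then show "- (1 - \<alpha> / 2) * ln (1 / (1 + exp (- v))) - \<alpha> / 2 * ln (1 / (1 + exp v))
       < - (1 - \<alpha> / 2) * ln (1 / (1 + exp (- (- v)))) - \<alpha> / 2 * ln (1 / (1 + exp (- v)))"
      by (simp add: algebra_simps)
  qed
  have "(phi_LS \<alpha> has_real_derivative (-(1-\<alpha>)/2)) (at 0)" unfolding phi_LS_def
    by (rule derivative_eq_intros refl | simp add: add_pos_pos)+ (simp add: field_simps)?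
  then show "\<exists>D<0. (phi_LS \<alpha> has_real_derivative D) (at 0)" using assms by (intro exI[of _ "-(1-\<alpha>)/2"]) auto
qed


lemma d_sigp: "((\<lambda>v. 1 / (1 + exp (- v))) has_real_derivative (1/4)) (at (0::real))"
  by (rule derivative_eq_intros refl | simp add: add_pos_pos)+
lemma d_sigm: "((\<lambda>v. 1 / (1 + exp v)) has_real_derivative (-1/4)) (at (0::real))"
  by (rule derivative_eq_intros refl | simp add: add_pos_pos)+
lemma d_ln_half: assumes "(f has_real_derivative d) (at (0::real))" "f 0 = 1/2"
  shows "((\<lambda>v. ln (f v)) has_real_derivative (2 * d)) (at 0)"
proof -
  have "(ln has_real_derivative inverse (f 0)) (at (f 0))" by (rule DERIV_ln) (simp add: assms)
  from DERIV_chain2[OF this assms(1)] show ?thesis using assms(2) by simp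
qed
lemma MLS_deriv: assumes "0 \<le> \<alpha>" "\<alpha> < (1::real)" shows
 "((\<lambda>v. - (1 - \<alpha> / 2) * ln ((1 - \<alpha>) / (1 + exp (- v)) + \<alpha> / 2)
                   - (\<alpha> / 2) * ln ((1 - \<alpha>) / (1 + exp v) + \<alpha> / 2)) has_real_derivative (- ((1-\<alpha>) * (1-\<alpha>)) / 2)) (at 0)"
proof -
  have e1: "(\<lambda>v. (1 - \<alpha>) / (1 + exp (- v)) + \<alpha> / 2) = (\<lambda>v. (1 - \<alpha>) * (1 / (1 + exp (- v))) + \<alpha> / 2)" by simp
  have e2: "(\<lambda>v. (1 - \<alpha>) / (1 + exp v) + \<alpha> / 2) = (\<lambda>v. (1 - \<alpha>) * (1 / (1 + exp v)) + \<alpha> / 2)" by simp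
  have a1: "((\<lambda>v. (1 - \<alpha>) / (1 + exp (- v)) + \<alpha> / 2) has_real_derivative ((1-\<alpha>) * (1/4))) (at 0)"
    unfolding e1 using DERIV_add[OF DERIV_cmult[OF d_sigp, of "1-\<alpha>"] DERIV_const[of "\<alpha>/2"]] by simp
  have a2: "((\<lambda>v. (1 - \<alpha>) / (1 + exp v) + \<alpha> / 2) has_real_derivative ((1-\<alpha>) * (-1/4))) (at 0)"
    unfolding e2 using DERIV_add[OF DERIV_cmult[OF d_sigm, of "1-\<alpha>"] DERIV_const[of "\<alpha>/2"]] by simp
  have l1: "((\<lambda>v. ln ((1 - \<alpha>) / (1 + exp (- v)) + \<alpha> / 2)) has_real_derivative (2 * ((1-\<alpha>) * (1/4)))) (at 0)"
    by (rule d_ln_half[OF a1]) (simp add: field_simps)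
  have l2: "((\<lambda>v. ln ((1 - \<alpha>) / (1 + exp v) + \<alpha> / 2)) has_real_derivative (2 * ((1-\<alpha>) * (-1/4)))) (at 0)"
    by (rule d_ln_half[OF a2]) (simp add: field_simps)
  show ?thesis by (rule DERIV_cong[OF DERIV_diff[OF DERIV_cmult[OF l1, of "- (1 - \<alpha> / 2)"] DERIV_cmult[OF l2, of "\<alpha> / 2"]]])
    (simp add: field_simps)
qed

lemma MLS_arg: assumes "0 \<le> \<alpha>" "\<alpha> < 1"
  shows "0 < (1 - \<alpha>) / (1 + exp (v::real)) + \<alpha> / 2" "(1 - \<alpha>) / (1 + exp (v::real)) + \<alpha> / 2 \<le> 1"
    "v > 0 \<Longrightarrow> (1 - \<alpha>) / (1 + exp v) + \<alpha> / 2 < (1 - \<alpha>) / (1 + exp (-v)) + \<alpha> / 2"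
proof -
  have s: "(1 - \<alpha>) / (1 + exp v) = (1 - \<alpha>) * (1 / (1 + exp v))" "(1 - \<alpha>) / (1 + exp (-v)) = (1 - \<alpha>) * (1 / (1 + exp (-v)))" by simp_all
  have p: "0 < (1 - \<alpha>) * (1 / (1 + exp v))" using assms sig_pos[of v] by simp
  show "0 < (1 - \<alpha>) / (1 + exp (v::real)) + \<alpha> / 2" using p assms unfolding s by simp
  have "(1 - \<alpha>) * (1 / (1 + exp v)) \<le> (1 - \<alpha>) * 1" using assms sig_le1[of v] by (intro mult_left_mono) auto
  then show "(1 - \<alpha>) / (1 + exp (v::real)) + \<alpha> / 2 \<le> 1" using assms unfolding s by simp
  show "v > 0 \<Longrightarrow> (1 - \<alpha>) / (1 + exp v) + \<alpha> / 2 < (1 - \<alpha>) / (1 + exp (-v)) + \<alpha> / 2"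
  proof -
    assume "v > 0"
    have "(1 - \<alpha>) * (1 / (1 + exp v)) < (1 - \<alpha>) * (1 / (1 + exp (-v)))"
      by (rule mult_strict_left_mono) (use assms sig_mono[OF \<open>v > 0\<close>] in auto)
    then show ?thesis by simp
  qed
qed

lemma MLS_props: assumes "0 \<le> \<alpha>" "\<alpha> < 1" shows
  "phi_MLS \<alpha> \<in> borel_measurable borel" "\<forall>v. phi_MLS \<alpha> v \<ge> 0" "\<forall>v>0. phi_MLS \<alpha> v < phi_MLS \<alpha> (- v)"
  "\<exists>D<0. (phi_MLS \<alpha> has_real_derivative D) (at 0)"
proof -
  show "phi_MLS \<alpha> \<in> borel_measurable borel" unfolding phi_MLS_def by measurable
  show "\<forall>v. phi_MLS \<alpha> v \<ge> 0" unfolding phi_MLS_def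
  proof
    fix v
    have "ln ((1 - \<alpha>) / (1 + exp (- v)) + \<alpha> / 2) \<le> 0"
      using MLS_arg[OF assms, of "-v"] by (simp add: ln_le_zero_iff)
    then have "0 \<le> (1 - \<alpha> / 2) * (- ln ((1 - \<alpha>) / (1 + exp (- v)) + \<alpha> / 2))" using assms by (intro mult_nonneg_nonneg) auto
    moreover have "ln ((1 - \<alpha>) / (1 + exp v) + \<alpha> / 2) \<le> 0"
      using MLS_arg[OF assms, of "v"] by (simp add: ln_le_zero_iff)
    then have "0 \<le> (\<alpha> / 2) * (- ln ((1 - \<alpha>) / (1 + exp v) + \<alpha> / 2))" using assms by (intro mult_nonneg_nonneg) auto
    ultimately show "0 \<le> - (1 - \<alpha> / 2) * ln ((1 - \<alpha>) / (1 + exp (- v)) + \<alpha> / 2)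
                   - (\<alpha> / 2) * ln ((1 - \<alpha>) / (1 + exp v) + \<alpha> / 2)"
      by (simp only: mult_minus_right mult_minus_left)
  qed
  show "\<forall>v>0. phi_MLS \<alpha> v < phi_MLS \<alpha> (- v)" unfolding phi_MLS_def
  proof (intro allI impI)
    fix v :: real assume "v > 0"
    then have "ln ((1 - \<alpha>) / (1 + exp v) + \<alpha> / 2) < ln ((1 - \<alpha>) / (1 + exp (-v)) + \<alpha> / 2)"
      using MLS_arg[OF assms] by (simp only: ln_less_cancel_iff)
    then have "(1 - \<alpha>) * ln ((1 - \<alpha>) / (1 + exp v) + \<alpha> / 2) < (1 - \<alpha>) * ln ((1 - \<alpha>) / (1 + exp (-v)) + \<alpha> / 2)"
      using assms by simp
    then show "- (1 - \<alpha> / 2) * ln ((1 - \<alpha>) / (1 + exp (- v)) + \<alpha> / 2) - \<alpha> / 2 * ln ((1 - \<alpha>) / (1 + exp v) + \<alpha> / 2)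
       < - (1 - \<alpha> / 2) * ln ((1 - \<alpha>) / (1 + exp (- (- v))) + \<alpha> / 2) - \<alpha> / 2 * ln ((1 - \<alpha>) / (1 + exp (- v)) + \<alpha> / 2)"
      by (simp add: algebra_simps)
  qed
  have "(phi_MLS \<alpha> has_real_derivative (- ((1-\<alpha>) * (1-\<alpha>)) / 2)) (at 0)" unfolding phi_MLS_def
    using MLS_deriv[OF assms] .
  then show "\<exists>D<0. (phi_MLS \<alpha> has_real_derivative D) (at 0)" using assms by (intro exI[of _ "- ((1-\<alpha>) * (1-\<alpha>)) / 2"]) auto
qed

lemma LSQ_props:
  "phi_LSQ \<in> borel_measurable borel" "\<forall>v. phi_LSQ v \<ge> 0" "\<forall>v>0. phi_LSQ v < phi_LSQ (- v)"
  "\<exists>D<0. (phi_LSQ has_real_derivative D) (at 0)"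
proof -
  show "phi_LSQ \<in> borel_measurable borel" unfolding phi_LSQ_def by measurable
  show "\<forall>v. phi_LSQ v \<ge> 0" unfolding phi_LSQ_def by simp
  show "\<forall>v>0. phi_LSQ v < phi_LSQ (- v)" unfolding phi_LSQ_def
  proof (intro allI impI)
    fix v :: real assume "v > 0"
    then have "1 + exp (-v) < 1 + exp v" by simp
    then have "(1 + exp (-v))^2 < (1 + exp v)^2" by (intro power_strict_mono) (auto simp: add_pos_pos less_imp_le)
    then show "1 / (2 * (1 + exp v)^2) < 1 / (2 * (1 + exp (- v))^2)"
      using add_pos_pos[OF zero_less_one exp_gt_zero[of "-v"]] add_pos_pos[OF zero_less_one exp_gt_zero[of "v"]]
      by (intro divide_strict_left_mono) (auto intro!: mult_pos_pos)
  qed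
  have "(phi_LSQ has_real_derivative (-1/8)) (at 0)" unfolding phi_LSQ_def
    by (rule derivative_eq_intros refl | simp add: add_pos_pos)+ (simp add: field_simps)?
  then show "\<exists>D<0. (phi_LSQ has_real_derivative D) (at 0)" by (intro exI[of _ "-1/8"]) auto
qed

lemma weighted:
  fixes M :: "'w measure" and X :: "'w \<Rightarrow> 'a" and w :: "'a \<Rightarrow> real"
  assumes X[measurable]: "X \<in> measurable M N" and w[measurable]: "w \<in> borel_measurable N"
    and wnn: "\<forall>x. w x \<ge> 0" and E1[measurable]: "E1 \<in> sets M" and E2[measurable]: "E2 \<in> sets M"
    and H: "\<forall>B\<in>sets N. (\<integral>\<^sup>+\<omega>. indicator E1 \<omega> * ennreal (w (X \<omega>)) * indicator B (X \<omega>) \<partial>M)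
                  \<le> (\<integral>\<^sup>+\<omega>. indicator E2 \<omega> * ennreal (w (X \<omega>)) * indicator B (X \<omega>) \<partial>M)"
    and C[measurable]: "C \<in> sets N" and Cpos: "\<forall>x\<in>C. w x > 0"
  shows "emeasure M {\<omega>\<in>space M. \<omega>\<in>E1 \<and> X \<omega> \<in> C} \<le> emeasure M {\<omega>\<in>space M. \<omega>\<in>E2 \<and> X \<omega> \<in> C}"
proof -
  define \<nu> where "\<nu> E = distr (density M (\<lambda>\<omega>. indicator E \<omega> * ennreal (w (X \<omega>)))) N X" for E
  have sets\<nu>: "sets (\<nu> E) = sets N" for E unfolding \<nu>_def by simp
  have em: "emeasure (\<nu> E) A = (\<integral>\<^sup>+\<omega>. indicator E \<omega> * ennreal (w (X \<omega>)) * indicator A (X \<omega>) \<partial>M)"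
    if "E \<in> sets M" "A \<in> sets N" for E A
  proof -
    have "emeasure (\<nu> E) A = emeasure (density M (\<lambda>\<omega>. indicator E \<omega> * ennreal (w (X \<omega>)))) (X -` A \<inter> space M)"
      unfolding \<nu>_def using that by (subst emeasure_distr) auto
    also have "\<dots> = (\<integral>\<^sup>+\<omega>. indicator E \<omega> * ennreal (w (X \<omega>)) * indicator (X -` A \<inter> space M) \<omega> \<partial>M)"
      using that by (subst emeasure_density) auto
    also have "\<dots> = (\<integral>\<^sup>+\<omega>. indicator E \<omega> * ennreal (w (X \<omega>)) * indicator A (X \<omega>) \<partial>M)"
      by (intro nn_integral_cong) (auto simp: indicator_def)
    finally show ?thesis .
  qed
  have sp: "space (\<nu> E) = space N" for E using sets_eq_imp_space_eq[OF sets\<nu>[of E]] .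
  have le: "\<nu> E1 \<le> \<nu> E2"
    unfolding le_measure_iff
  proof (simp add: sets\<nu> sp, intro le_funI)
    fix A
    show "emeasure (\<nu> E1) A \<le> emeasure (\<nu> E2) A"
    proof (cases "A \<in> sets N")
      case True then show ?thesis using H em[OF E1 True] em[OF E2 True] by simp
    next
      case False then show ?thesis by (simp add: emeasure_notin_sets sets\<nu>)
    qed
  qed
  define f where "f x = indicator C x * ennreal (1 / w x)" for x
  have int: "integral\<^sup>N (\<nu> E) f = emeasure M {\<omega>\<in>space M. \<omega>\<in>E \<and> X \<omega> \<in> C}" if [measurable]: "E \<in> sets M" for E
  proof -
    have "integral\<^sup>N (\<nu> E) f = (\<integral>\<^sup>+\<omega>. f (X \<omega>) \<partial>density M (\<lambda>\<omega>. indicator E \<omega> * ennreal (w (X \<omega>))))"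
      unfolding \<nu>_def f_def by (subst nn_integral_distr) auto
    also have "\<dots> = (\<integral>\<^sup>+\<omega>. indicator E \<omega> * ennreal (w (X \<omega>)) * f (X \<omega>) \<partial>M)"
      unfolding f_def by (subst nn_integral_density) auto
    also have "\<dots> = (\<integral>\<^sup>+\<omega>. indicator {\<omega>\<in>space M. \<omega>\<in>E \<and> X \<omega> \<in> C} \<omega> \<partial>M)"
    proof (intro nn_integral_cong)
      fix \<omega> assume "\<omega> \<in> space M"
      show "indicator E \<omega> * ennreal (w (X \<omega>)) * f (X \<omega>) = indicator {\<omega>\<in>space M. \<omega>\<in>E \<and> X \<omega> \<in> C} \<omega>"
        using \<open>\<omega> \<in> space M\<close> Cpos wnn unfolding f_def
        by (auto simp: indicator_def ennreal_mult'[symmetric] simp del: ennreal_1 intro!: arg_cong[where f=ennreal])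
    qed
    also have "\<dots> = emeasure M {\<omega>\<in>space M. \<omega>\<in>E \<and> X \<omega> \<in> C}"
      by (subst nn_integral_indicator) auto
    finally show ?thesis .
  qed
  show ?thesis using nn_integral_mono_measure[OF _ le, of f] int[OF E1] int[OF E2] by (simp add: sets\<nu>)
qed

lemma modify:
  fixes M :: "'w measure" and X :: "'w \<Rightarrow> 'a::topological_space" and Y :: "'w \<Rightarrow> real"
    and \<phi> :: "real \<Rightarrow> real" and gbar g :: "'a \<Rightarrow> real"
  assumes X[measurable]: "X \<in> borel_measurable M" and Y[measurable]: "Y \<in> borel_measurable M"
    and phi[measurable]: "\<phi> \<in> borel_measurable borel" and nn: "\<forall>v. \<phi> v \<ge> 0"
    and gbar[measurable]: "gbar \<in> borel_measurable borel" and g[measurable]: "g \<in> borel_measurable borel"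
    and min: "\<forall>g \<in> borel_measurable borel.
           (\<integral>\<^sup>+ \<omega>. ennreal (\<phi> (Y \<omega> * gbar (X \<omega>))) \<partial>M)
             \<le> (\<integral>\<^sup>+ \<omega>. ennreal (\<phi> (Y \<omega> * g (X \<omega>))) \<partial>M)"
    and fin: "(\<integral>\<^sup>+ \<omega>. ennreal (\<phi> (Y \<omega> * gbar (X \<omega>))) \<partial>M) \<noteq> \<infinity>"
    and B[measurable]: "B \<in> sets borel" and eq: "\<forall>x. x \<notin> B \<longrightarrow> g x = gbar x"
  shows "(\<integral>\<^sup>+ \<omega>. ennreal (\<phi> (Y \<omega> * gbar (X \<omega>))) * indicator B (X \<omega>) \<partial>M)
       \<le> (\<integral>\<^sup>+ \<omega>. ennreal (\<phi> (Y \<omega> * g (X \<omega>))) * indicator B (X \<omega>) \<partial>M)"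
proof -
  have split: "(\<integral>\<^sup>+ \<omega>. ennreal (\<phi> (Y \<omega> * h (X \<omega>))) \<partial>M)
     = (\<integral>\<^sup>+ \<omega>. ennreal (\<phi> (Y \<omega> * h (X \<omega>))) * indicator B (X \<omega>) \<partial>M)
     + (\<integral>\<^sup>+ \<omega>. ennreal (\<phi> (Y \<omega> * h (X \<omega>))) * indicator (- B) (X \<omega>) \<partial>M)"
    if [measurable]: "h \<in> borel_measurable borel" for h
    by (subst nn_integral_add[symmetric]) (auto intro!: nn_integral_cong simp: indicator_def)
  define a where "a = (\<integral>\<^sup>+ \<omega>. ennreal (\<phi> (Y \<omega> * gbar (X \<omega>))) * indicator (- B) (X \<omega>) \<partial>M)"
  have a2: "a = (\<integral>\<^sup>+ \<omega>. ennreal (\<phi> (Y \<omega> * g (X \<omega>))) * indicator (- B) (X \<omega>) \<partial>M)"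
    unfolding a_def using eq by (intro nn_integral_cong) (auto simp: indicator_def)
  have "a \<le> (\<integral>\<^sup>+ \<omega>. ennreal (\<phi> (Y \<omega> * gbar (X \<omega>))) \<partial>M)"
    unfolding split[OF gbar] a_def by simp
  then have afin: "a \<noteq> \<infinity>" using fin by (auto simp: top_unique)
  have "a + (\<integral>\<^sup>+ \<omega>. ennreal (\<phi> (Y \<omega> * gbar (X \<omega>))) * indicator B (X \<omega>) \<partial>M)
       \<le> a + (\<integral>\<^sup>+ \<omega>. ennreal (\<phi> (Y \<omega> * g (X \<omega>))) * indicator B (X \<omega>) \<partial>M)"
    using min[rule_format, OF g] unfolding split[OF gbar] split[OF g] a_def[symmetric] a2[symmetric]
    by (simp add: add.commute)
  then show ?thesis using afin by (simp add: ennreal_add_left_cancel_le)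
qed

lemma ennreal_split_aux: "0 \<le> (a::real) \<Longrightarrow> a \<le> b \<Longrightarrow> ennreal b = ennreal a + ennreal (b - a)"
  by (subst ennreal_plus[symmetric]) auto

lemma core:
  fixes M :: "'w measure" and X :: "'w \<Rightarrow> 'a::topological_space" and Z :: "'w \<Rightarrow> real"
    and \<phi> :: "real \<Rightarrow> real" and G :: "'a \<Rightarrow> real"
  assumes X[measurable]: "X \<in> borel_measurable M" and Z[measurable]: "Z \<in> borel_measurable M"
    and Zpm: "\<forall>\<omega>\<in>space M. Z \<omega> \<in> {1, -1}"
    and phi[measurable]: "\<phi> \<in> borel_measurable borel" and nn: "\<forall>v. \<phi> v \<ge> 0"
    and psi: "\<forall>v>0. \<phi> v < \<phi> (- v)"
    and G[measurable]: "G \<in> borel_measurable borel"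
    and fin: "(\<integral>\<^sup>+ \<omega>. ennreal (\<phi> (Z \<omega> * G (X \<omega>))) \<partial>M) \<noteq> \<infinity>"
    and flip: "\<forall>B\<in>sets borel. B \<subseteq> {x. G x > 0} \<longrightarrow>
       (\<integral>\<^sup>+ \<omega>. ennreal (\<phi> (Z \<omega> * G (X \<omega>))) * indicator B (X \<omega>) \<partial>M)
       \<le> (\<integral>\<^sup>+ \<omega>. ennreal (\<phi> (- Z \<omega> * G (X \<omega>))) * indicator B (X \<omega>) \<partial>M)"
    and C[measurable]: "C \<in> sets borel" and CG: "C \<subseteq> {x. G x > 0}"
  shows "emeasure M {\<omega>\<in>space M. \<omega> \<in> {\<omega>\<in>space M. Z \<omega> = -1} \<and> X \<omega> \<in> C}
       \<le> emeasure M {\<omega>\<in>space M. \<omega> \<in> {\<omega>\<in>space M. Z \<omega> = 1} \<and> X \<omega> \<in> C}"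
proof -
  define w where "w x = (if G x > 0 then \<phi> (- G x) - \<phi> (G x) else 0)" for x
  have w[measurable]: "w \<in> borel_measurable borel" unfolding w_def by measurable
  have wnn: "\<forall>x. w x \<ge> 0" unfolding w_def using psi by (auto simp: less_imp_le)
  have wpos: "\<forall>x\<in>C. w x > 0" unfolding w_def using psi CG by auto
  define E1 where "E1 = {\<omega>\<in>space M. Z \<omega> = -1}"
  define E2 where "E2 = {\<omega>\<in>space M. Z \<omega> = 1}"
  have E1[measurable]: "E1 \<in> sets M" unfolding E1_def by measurable
  have E2[measurable]: "E2 \<in> sets M" unfolding E2_def by measurable
  have H: "\<forall>B\<in>sets borel. (\<integral>\<^sup>+\<omega>. indicator E1 \<omega> * ennreal (w (X \<omega>)) * indicator B (X \<omega>) \<partial>M)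
                  \<le> (\<integral>\<^sup>+\<omega>. indicator E2 \<omega> * ennreal (w (X \<omega>)) * indicator B (X \<omega>) \<partial>M)"
  proof
    fix B :: "'a set" assume B[measurable]: "B \<in> sets borel"
    define B' where "B' = B \<inter> {x. G x > 0}"
    have B'[measurable]: "B' \<in> sets borel" unfolding B'_def by measurable
    define b where "b = (\<integral>\<^sup>+\<omega>. ennreal (\<phi> (G (X \<omega>))) * indicator B' (X \<omega>) \<partial>M)"
    have p1: "(\<integral>\<^sup>+ \<omega>. ennreal (\<phi> (Z \<omega> * G (X \<omega>))) * indicator B' (X \<omega>) \<partial>M)
       = b + (\<integral>\<^sup>+\<omega>. indicator E1 \<omega> * ennreal (w (X \<omega>)) * indicator B (X \<omega>) \<partial>M)"
      unfolding b_def
      apply (subst nn_integral_add[symmetric])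
        apply simp apply simp
      apply (intro nn_integral_cong)
      subgoal for \<omega> using Zpm[rule_format, of \<omega>] nn wnn psi[rule_format, of "G (X \<omega>)"]
        unfolding w_def indicator_def B'_def E1_def
        by (auto intro!: ennreal_split_aux w_def ennreal_plus[symmetric] simp del: ennreal_plus)
      done
    have p2: "(\<integral>\<^sup>+ \<omega>. ennreal (\<phi> (- Z \<omega> * G (X \<omega>))) * indicator B' (X \<omega>) \<partial>M)
       = b + (\<integral>\<^sup>+\<omega>. indicator E2 \<omega> * ennreal (w (X \<omega>)) * indicator B (X \<omega>) \<partial>M)"
      unfolding b_def
      apply (subst nn_integral_add[symmetric])
        apply simp apply simp
      apply (intro nn_integral_cong)
      subgoal for \<omega> using Zpm[rule_format, of \<omega>] nn wnn psi[rule_format, of "G (X \<omega>)"]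
        unfolding w_def indicator_def B'_def E2_def
        by (auto intro!: ennreal_split_aux w_def ennreal_plus[symmetric] simp del: ennreal_plus)
      done
    have "b \<le> (\<integral>\<^sup>+ \<omega>. ennreal (\<phi> (Z \<omega> * G (X \<omega>))) \<partial>M)"
      unfolding b_def
    proof (intro nn_integral_mono)
      fix \<omega> assume "\<omega> \<in> space M"
      then show "ennreal (\<phi> (G (X \<omega>))) * indicator B' (X \<omega>) \<le> ennreal (\<phi> (Z \<omega> * G (X \<omega>)))"
        using Zpm[rule_format, of \<omega>] psi[rule_format, of "G (X \<omega>)"]
        by (auto simp: indicator_def B'_def intro!: ennreal_leI)
    qed
    then have bfin: "b \<noteq> \<infinity>" using fin by (auto simp: top_unique)
    have "B' \<subseteq> {x. G x > 0}" unfolding B'_def by auto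
    then show "(\<integral>\<^sup>+\<omega>. indicator E1 \<omega> * ennreal (w (X \<omega>)) * indicator B (X \<omega>) \<partial>M)
                  \<le> (\<integral>\<^sup>+\<omega>. indicator E2 \<omega> * ennreal (w (X \<omega>)) * indicator B (X \<omega>) \<partial>M)"
      using flip[rule_format, OF B'] bfin unfolding p1 p2 by (simp add: ennreal_add_left_cancel_le)
  qed
  show ?thesis using weighted[OF X w wnn E1 E2 H C wpos] unfolding E1_def E2_def .
qed

lemma deriv_arg:
  fixes \<phi> :: "real \<Rightarrow> real"
  assumes d: "(\<phi> has_real_derivative D) (at 0)" and "D < 0" and "0 \<le> q"
    and H: "\<forall>t. (p + q) * \<phi> 0 \<le> p * \<phi> t + q * \<phi> (- t)"
  shows "p \<le> q"
proof (rule ccontr)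
  assume "\<not> p \<le> q"
  have d2: "(\<phi> has_real_derivative D) (at (- 0))" using d by simp
  have "((\<lambda>t. p * \<phi> t + q * \<phi> (- t)) has_real_derivative (p * D + q * (D * - 1))) (at 0)"
  proof -
    have m: "((\<lambda>t. - t) has_real_derivative -1) (at 0)" by (auto intro!: derivative_eq_intros)
    have d3: "((\<lambda>t. \<phi> (- t)) has_real_derivative (D * -1)) (at 0)" using DERIV_chain2[OF d2 m] .
    show ?thesis using DERIV_add[OF DERIV_cmult[OF d, of p] DERIV_cmult[OF d3, of q]] by simp
  qed
  moreover have "p * D + q * (D * - 1) < 0" using \<open>\<not> p \<le> q\<close> \<open>D < 0\<close>
    by (simp add: algebra_simps mult_strict_right_mono_neg)
  ultimately obtain d where "d > 0" "\<forall>h>0. h < d \<longrightarrow> p * \<phi> (0 + h) + q * \<phi> (- (0 + h)) < p * \<phi> 0 + q * \<phi> (- 0)"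
    using DERIV_neg_dec_right by blast
  then have "p * \<phi> (d/2) + q * \<phi> (- (d/2)) < (p + q) * \<phi> 0" by (auto simp: algebra_simps)
  then show False using H[rule_format, of "d/2"] by linarith
qed

lemma zero:
  fixes M :: "'w measure" and X :: "'w \<Rightarrow> 'a::topological_space" and Y :: "'w \<Rightarrow> real"
    and \<phi> :: "real \<Rightarrow> real" and gbar :: "'a \<Rightarrow> real"
  assumes P: "prob_space M"
    and X[measurable]: "X \<in> borel_measurable M" and Y[measurable]: "Y \<in> borel_measurable M"
    and Ypm: "\<forall>\<omega>\<in>space M. Y \<omega> \<in> {1, -1}"
    and phi[measurable]: "\<phi> \<in> borel_measurable borel" and nn: "\<forall>v. \<phi> v \<ge> 0"
    and der: "(\<phi> has_real_derivative D) (at 0)" "D < 0"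
    and gbar[measurable]: "gbar \<in> borel_measurable borel"
    and min: "\<forall>g \<in> borel_measurable borel.
           (\<integral>\<^sup>+ \<omega>. ennreal (\<phi> (Y \<omega> * gbar (X \<omega>))) \<partial>M)
             \<le> (\<integral>\<^sup>+ \<omega>. ennreal (\<phi> (Y \<omega> * g (X \<omega>))) \<partial>M)"
    and fin: "(\<integral>\<^sup>+ \<omega>. ennreal (\<phi> (Y \<omega> * gbar (X \<omega>))) \<partial>M) \<noteq> \<infinity>"
    and C[measurable]: "C \<in> sets borel" and CG: "C \<subseteq> {x. gbar x = 0}"
  shows "measure M {\<omega>\<in>space M. Y \<omega> = 1 \<and> X \<omega> \<in> C} \<le> measure M {\<omega>\<in>space M. Y \<omega> = -1 \<and> X \<omega> \<in> C}"
proof -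
  interpret prob_space M by (rule P)
  define Pp where "Pp = {\<omega>\<in>space M. Y \<omega> = 1 \<and> X \<omega> \<in> C}"
  define Pm where "Pm = {\<omega>\<in>space M. Y \<omega> = -1 \<and> X \<omega> \<in> C}"
  have [measurable]: "Pp \<in> sets M" "Pm \<in> sets M" unfolding Pp_def Pm_def by measurable
  have key: "(\<integral>\<^sup>+ \<omega>. ennreal (\<phi> (Y \<omega> * (if X \<omega> \<in> C then t else gbar (X \<omega>)))) * indicator C (X \<omega>) \<partial>M)
     = ennreal (\<phi> t * measure M Pp + \<phi> (-t) * measure M Pm)" for t
  proof -
    have "(\<integral>\<^sup>+ \<omega>. ennreal (\<phi> (Y \<omega> * (if X \<omega> \<in> C then t else gbar (X \<omega>)))) * indicator C (X \<omega>) \<partial>M)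
      = (\<integral>\<^sup>+ \<omega>. ennreal (\<phi> t) * indicator Pp \<omega> + ennreal (\<phi> (-t)) * indicator Pm \<omega> \<partial>M)"
      using Ypm by (intro nn_integral_cong) (auto simp: indicator_def Pp_def Pm_def)
    also have "\<dots> = ennreal (\<phi> t) * emeasure M Pp + ennreal (\<phi> (-t)) * emeasure M Pm"
      by (subst nn_integral_add) (auto simp: nn_integral_cmult_indicator)
    also have "\<dots> = ennreal (\<phi> t * measure M Pp + \<phi> (-t) * measure M Pm)"
      using nn by (simp add: emeasure_eq_measure ennreal_mult ennreal_plus)
    finally show ?thesis .
  qed
  have "\<forall>t. (measure M Pp + measure M Pm) * \<phi> 0 \<le> measure M Pp * \<phi> t + measure M Pm * \<phi> (- t)"
  proof
    fix t
    have g[measurable]: "(\<lambda>x. if x \<in> C then t else gbar x) \<in> borel_measurable borel" by measurable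
    have "(\<integral>\<^sup>+ \<omega>. ennreal (\<phi> (Y \<omega> * gbar (X \<omega>))) * indicator C (X \<omega>) \<partial>M)
       \<le> (\<integral>\<^sup>+ \<omega>. ennreal (\<phi> (Y \<omega> * (if X \<omega> \<in> C then t else gbar (X \<omega>)))) * indicator C (X \<omega>) \<partial>M)"
      by (rule modify[OF X Y phi nn gbar g min fin C]) auto
    moreover have "(\<integral>\<^sup>+ \<omega>. ennreal (\<phi> (Y \<omega> * gbar (X \<omega>))) * indicator C (X \<omega>) \<partial>M)
       = (\<integral>\<^sup>+ \<omega>. ennreal (\<phi> (Y \<omega> * (if X \<omega> \<in> C then 0 else gbar (X \<omega>)))) * indicator C (X \<omega>) \<partial>M)"
      using CG by (intro nn_integral_cong) (auto simp: indicator_def)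
    ultimately have "ennreal (\<phi> 0 * measure M Pp + \<phi> (-0) * measure M Pm) \<le> ennreal (\<phi> t * measure M Pp + \<phi> (-t) * measure M Pm)"
      unfolding key by simp
    then have "\<phi> 0 * measure M Pp + \<phi> (-0) * measure M Pm \<le> \<phi> t * measure M Pp + \<phi> (-t) * measure M Pm"
      using nn by (subst (asm) ennreal_le_iff) (auto intro!: add_nonneg_nonneg)
    then show "(measure M Pp + measure M Pm) * \<phi> 0 \<le> measure M Pp * \<phi> t + measure M Pm * \<phi> (- t)"
      by (simp add: algebra_simps)
  qed
  from deriv_arg[OF der measure_nonneg this] show ?thesis unfolding Pp_def Pm_def .
qed

lemma phi_props: assumes "0 \<le> \<alpha>" "\<alpha> < 1" "\<phi> \<in> {phi_LR, phi_LS \<alpha>, phi_MLS \<alpha>, phi_LSQ}"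
  shows "\<phi> \<in> borel_measurable borel" "\<forall>v. \<phi> v \<ge> 0" "\<forall>v>0. \<phi> v < \<phi> (- v)"
    "\<exists>D<0. (\<phi> has_real_derivative D) (at 0)"
  using assms(3) LR_props LS_props[OF assms(1,2)] MLS_props[OF assms(1,2)] LSQ_props by auto

lemma hcl_meas[measurable]: "hcl \<in> borel_measurable borel"
  unfolding hcl_def by measurable

theorem corollary2:
  fixes M :: "'w measure" and X :: "'w \<Rightarrow> real ^ 'd" and Y :: "'w \<Rightarrow> real"
    and \<alpha> :: real and \<phi> :: "real \<Rightarrow> real" and gbar :: "real ^ 'd \<Rightarrow> real"
  assumes "prob_space M"
    and "X \<in> borel_measurable M"
    and "Y \<in> borel_measurable M"
    and "\<forall>\<omega>\<in>space M. Y \<omega> \<in> {1, -1}"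
    and "0 \<le> \<alpha>" and "\<alpha> < 1"
    and "\<phi> \<in> {phi_LR, phi_LS \<alpha>, phi_MLS \<alpha>, phi_LSQ}"
    and "gbar \<in> borel_measurable borel"
    and "\<forall>g \<in> borel_measurable borel.
           (\<integral>\<^sup>+ \<omega>. ennreal (\<phi> (Y \<omega> * gbar (X \<omega>))) \<partial>M)
             \<le> (\<integral>\<^sup>+ \<omega>. ennreal (\<phi> (Y \<omega> * g (X \<omega>))) \<partial>M)"
  shows "measure M {\<omega> \<in> space M. hcl (gbar (X \<omega>)) \<noteq> Y \<omega>}
         = (INF f \<in> {f :: real ^ 'd \<Rightarrow> real. f \<in> borel_measurable borel \<and> (\<forall>x. f x \<in> {1, -1})}.
              measure M {\<omega> \<in> space M. f (X \<omega>) \<noteq> Y \<omega>})"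
proof -
  note P = assms(1)
  interpret prob_space M by (rule P)
  note X[measurable] = assms(2) and Y[measurable] = assms(3) and Ypm = assms(4)
  note gbar[measurable] = assms(8) and min = assms(9)
  note phi[measurable] = phi_props(1)[OF assms(5-7)] and nn = phi_props(2)[OF assms(5-7)]
    and psi = phi_props(3)[OF assms(5-7)]
  obtain D where der: "(\<phi> has_real_derivative D) (at 0)" "D < 0" using phi_props(4)[OF assms(5-7)] by blast
  have "(\<integral>\<^sup>+ \<omega>. ennreal (\<phi> (Y \<omega> * gbar (X \<omega>))) \<partial>M) \<le> (\<integral>\<^sup>+ \<omega>. ennreal (\<phi> (Y \<omega> * (\<lambda>x. 0) (X \<omega>))) \<partial>M)"
    by (rule min[rule_format]) simp
  also have "\<dots> = ennreal (\<phi> 0)" by (simp add: emeasure_space_1)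
  finally have fin: "(\<integral>\<^sup>+ \<omega>. ennreal (\<phi> (Y \<omega> * gbar (X \<omega>))) \<partial>M) \<noteq> \<infinity>" by (auto simp: top_unique)
  have flip: "(\<integral>\<^sup>+ \<omega>. ennreal (\<phi> (Y \<omega> * gbar (X \<omega>))) * indicator B (X \<omega>) \<partial>M)
       \<le> (\<integral>\<^sup>+ \<omega>. ennreal (\<phi> (- (Y \<omega> * gbar (X \<omega>)))) * indicator B (X \<omega>) \<partial>M)"
    if B[measurable]: "B \<in> sets borel" for B
  proof -
    have g[measurable]: "(\<lambda>x. if x \<in> B then - gbar x else gbar x) \<in> borel_measurable borel" by measurable
    have "(\<integral>\<^sup>+ \<omega>. ennreal (\<phi> (Y \<omega> * gbar (X \<omega>))) * indicator B (X \<omega>) \<partial>M)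
       \<le> (\<integral>\<^sup>+ \<omega>. ennreal (\<phi> (Y \<omega> * (if X \<omega> \<in> B then - gbar (X \<omega>) else gbar (X \<omega>)))) * indicator B (X \<omega>) \<partial>M)"
      by (rule modify[OF X Y phi nn gbar g min fin B]) auto
    also have "\<dots> = (\<integral>\<^sup>+ \<omega>. ennreal (\<phi> (- (Y \<omega> * gbar (X \<omega>)))) * indicator B (X \<omega>) \<partial>M)"
      by (intro nn_integral_cong) (auto simp: indicator_def)
    finally show ?thesis .
  qed
  define Q where "Q s C = {\<omega>\<in>space M. Y \<omega> = s \<and> X \<omega> \<in> C}" for s :: real and C
  have Q[measurable]: "Q s C \<in> sets M" if "C \<in> sets borel" for s C unfolding Q_def using that by measurable
  have Kp: "measure M (Q (-1) C) \<le> measure M (Q 1 C)" if C[measurable]: "C \<in> sets borel" and CG: "C \<subseteq> {x. gbar x > 0}" for C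
  proof -
    have "emeasure M {\<omega>\<in>space M. \<omega> \<in> {\<omega>\<in>space M. Y \<omega> = -1} \<and> X \<omega> \<in> C}
       \<le> emeasure M {\<omega>\<in>space M. \<omega> \<in> {\<omega>\<in>space M. Y \<omega> = 1} \<and> X \<omega> \<in> C}"
    proof (rule core[OF X Y Ypm phi nn psi gbar fin _ C CG], intro ballI impI)
      fix B :: "(real ^ 'd) set" assume "B \<in> sets borel"
      from flip[OF this] show "(\<integral>\<^sup>+ \<omega>. ennreal (\<phi> (Y \<omega> * gbar (X \<omega>))) * indicator B (X \<omega>) \<partial>M)
       \<le> (\<integral>\<^sup>+ \<omega>. ennreal (\<phi> (- Y \<omega> * gbar (X \<omega>))) * indicator B (X \<omega>) \<partial>M)" by simp
    qed
    moreover have "{\<omega>\<in>space M. \<omega> \<in> {\<omega>\<in>space M. Y \<omega> = s} \<and> X \<omega> \<in> C} = Q s C" for s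
      unfolding Q_def by auto
    ultimately show ?thesis by (simp add: emeasure_eq_measure)
  qed
  have Km: "measure M (Q 1 C) \<le> measure M (Q (-1) C)" if C[measurable]: "C \<in> sets borel" and CG: "C \<subseteq> {x. gbar x < 0}" for C
  proof -
    have Zm[measurable]: "(\<lambda>\<omega>. - Y \<omega>) \<in> borel_measurable M" by measurable
    have Gm[measurable]: "(\<lambda>x. - gbar x) \<in> borel_measurable borel" by measurable
    have "emeasure M {\<omega>\<in>space M. \<omega> \<in> {\<omega>\<in>space M. - Y \<omega> = -1} \<and> X \<omega> \<in> C}
       \<le> emeasure M {\<omega>\<in>space M. \<omega> \<in> {\<omega>\<in>space M. - Y \<omega> = 1} \<and> X \<omega> \<in> C}"
    proof (rule core[OF X Zm _ phi nn psi Gm _ _ C])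
      show "\<forall>\<omega>\<in>space M. - Y \<omega> \<in> {1, - 1}" using Ypm by auto
      show "(\<integral>\<^sup>+ \<omega>. ennreal (\<phi> (- Y \<omega> * - gbar (X \<omega>))) \<partial>M) \<noteq> \<infinity>" using fin by simp
      show "C \<subseteq> {x. 0 < - gbar x}" using CG by auto
      show "\<forall>B\<in>sets borel. B \<subseteq> {x. 0 < - gbar x} \<longrightarrow>
       (\<integral>\<^sup>+ \<omega>. ennreal (\<phi> (- Y \<omega> * - gbar (X \<omega>))) * indicator B (X \<omega>) \<partial>M)
       \<le> (\<integral>\<^sup>+ \<omega>. ennreal (\<phi> (- (- Y \<omega>) * - gbar (X \<omega>))) * indicator B (X \<omega>) \<partial>M)"
      proof (intro ballI impI)
        fix B :: "(real ^ 'd) set" assume "B \<in> sets borel"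
        from flip[OF this] show "(\<integral>\<^sup>+ \<omega>. ennreal (\<phi> (- Y \<omega> * - gbar (X \<omega>))) * indicator B (X \<omega>) \<partial>M)
       \<le> (\<integral>\<^sup>+ \<omega>. ennreal (\<phi> (- (- Y \<omega>) * - gbar (X \<omega>))) * indicator B (X \<omega>) \<partial>M)" by simp
      qed
    qed
    note le = this
    have eqQ: "{\<omega>\<in>space M. \<omega> \<in> {\<omega>\<in>space M. - Y \<omega> = - s} \<and> X \<omega> \<in> C} = Q s C" for s
      unfolding Q_def by auto
    show ?thesis using le eqQ[of 1] eqQ[of "-1"] by (simp add: emeasure_eq_measure)
  qed
  have K0: "measure M (Q 1 C) \<le> measure M (Q (-1) C)" if C[measurable]: "C \<in> sets borel" and CG: "C \<subseteq> {x. gbar x = 0}" for C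
    unfolding Q_def by (rule zero[OF P X Y Ypm phi nn der gbar min fin C CG])
  have Km0: "measure M (Q 1 C) \<le> measure M (Q (-1) C)" if C[measurable]: "C \<in> sets borel" and CG: "C \<subseteq> {x. gbar x \<le> 0}" for C
  proof -
    define C1 where "C1 = C \<inter> {x. gbar x < 0}"
    define C2 where "C2 = C \<inter> {x. gbar x = 0}"
    have [measurable]: "C1 \<in> sets borel" "C2 \<in> sets borel" unfolding C1_def C2_def by measurable
    have split: "measure M (Q s C) = measure M (Q s C1) + measure M (Q s C2)" for s
    proof -
      have "Q s C = Q s C1 \<union> Q s C2" using CG unfolding Q_def C1_def C2_def by force
      moreover have "Q s C1 \<inter> Q s C2 = {}" unfolding Q_def C1_def C2_def by auto
      ultimately show ?thesis by (simp add: finite_measure_Union)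
    qed
    show ?thesis unfolding split using Km[of C1] K0[of C2] unfolding C1_def C2_def by fastforce
  qed
  let ?F = "{f :: real ^ 'd \<Rightarrow> real. f \<in> borel_measurable borel \<and> (\<forall>x. f x \<in> {1, -1})}"
  have main: "measure M {\<omega> \<in> space M. hcl (gbar (X \<omega>)) \<noteq> Y \<omega>} \<le> measure M {\<omega> \<in> space M. f (X \<omega>) \<noteq> Y \<omega>}"
    if "f \<in> ?F" for f
  proof -
    have f[measurable]: "f \<in> borel_measurable borel" and fpm: "\<forall>x. f x \<in> {1, -1}" using that by auto
    define A where "A = {x. f x \<noteq> hcl (gbar x)}"
    have A[measurable]: "A \<in> sets borel" unfolding A_def by measurable
    define U where "U = {\<omega>\<in>space M. X \<omega> \<notin> A \<and> f (X \<omega>) \<noteq> Y \<omega>}"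
    have U[measurable]: "U \<in> sets M" unfolding U_def by measurable
    define Sp where "Sp = {x. gbar x > 0}"
    define Sm where "Sm = {x. gbar x \<le> 0}"
    have [measurable]: "Sp \<in> sets borel" "Sm \<in> sets borel" unfolding Sp_def Sm_def by measurable
    have e1: "{\<omega> \<in> space M. hcl (gbar (X \<omega>)) \<noteq> Y \<omega>} = (U \<union> Q (-1) (A \<inter> Sp)) \<union> Q 1 (A \<inter> Sm)"
      using Ypm unfolding U_def Q_def A_def Sp_def Sm_def hcl_def by force
    have e2: "{\<omega> \<in> space M. f (X \<omega>) \<noteq> Y \<omega>} = (U \<union> Q 1 (A \<inter> Sp)) \<union> Q (-1) (A \<inter> Sm)"
      using Ypm fpm unfolding U_def Q_def A_def Sp_def Sm_def hcl_def by force
    have m1: "measure M {\<omega> \<in> space M. hcl (gbar (X \<omega>)) \<noteq> Y \<omega>}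
        = measure M U + measure M (Q (-1) (A \<inter> Sp)) + measure M (Q 1 (A \<inter> Sm))"
      unfolding e1 
      by (subst finite_measure_Union, simp, simp, (auto simp: U_def Q_def A_def Sp_def Sm_def)[1],
          subst finite_measure_Union, simp, simp, (auto simp: U_def Q_def A_def Sp_def Sm_def)[1], simp)
    have m2: "measure M {\<omega> \<in> space M. f (X \<omega>) \<noteq> Y \<omega>}
        = measure M U + measure M (Q 1 (A \<inter> Sp)) + measure M (Q (-1) (A \<inter> Sm))"
      unfolding e2
      by (subst finite_measure_Union, simp, simp, (auto simp: U_def Q_def A_def Sp_def Sm_def)[1],
          subst finite_measure_Union, simp, simp, (auto simp: U_def Q_def A_def Sp_def Sm_def)[1], simp)
    have "measure M (Q (-1) (A \<inter> Sp)) \<le> measure M (Q 1 (A \<inter> Sp))" by (rule Kp) (auto simp: Sp_def)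
    moreover have "measure M (Q 1 (A \<inter> Sm)) \<le> measure M (Q (-1) (A \<inter> Sm))" by (rule Km0) (auto simp: Sm_def)
    ultimately show ?thesis unfolding m1 m2 by linarith
  qed
  have mem: "(\<lambda>x. hcl (gbar x)) \<in> ?F" by (auto simp: hcl_def)
  have bdd: "bdd_below ((\<lambda>f. measure M {\<omega> \<in> space M. f (X \<omega>) \<noteq> Y \<omega>}) ` ?F)"
    by (rule bdd_belowI[of _ 0]) auto
  show ?thesis
  proof (rule antisym)
    show "measure M {\<omega> \<in> space M. hcl (gbar (X \<omega>)) \<noteq> Y \<omega>} \<le> (INF f \<in> ?F. measure M {\<omega> \<in> space M. f (X \<omega>) \<noteq> Y \<omega>})"
    proof (rule cINF_greatest)
      show "?F \<noteq> {}" using mem by blast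
    next
      fix f assume "f \<in> ?F" then show "measure M {\<omega> \<in> space M. hcl (gbar (X \<omega>)) \<noteq> Y \<omega>} \<le> measure M {\<omega> \<in> space M. f (X \<omega>) \<noteq> Y \<omega>}"
        by (rule main)
    qed
    show "(INF f \<in> ?F. measure M {\<omega> \<in> space M. f (X \<omega>) \<noteq> Y \<omega>}) \<le> measure M {\<omega> \<in> space M. hcl (gbar (X \<omega>)) \<noteq> Y \<omega>}"
      using cINF_lower[OF bdd mem] by simp
  qed
qed

end
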